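(* Let $\boldsymbol k$ be an algebraically closed field with $\operatorname{char}\boldsymbol k\neq 2$, let $V$ be a vector space over $\boldsymbol k$ of finite dimension $n$, and let $\mathcal C\subseteq V^*\otimes V^*\otimes V$ be the subspace of tensors fixed by the involution $\ell\otimes\ell'\otimes v\mapsto \ell'\otimes\ell\otimes v$. Then there is a nonempty (dense) open subset $U\subseteq\mathcal C$ such that for every $m\in U$ the $\boldsymbol k$-algebra $\{V,m\}$ is a simple commutative algebra with trivial automorphism group.
   Context: For $m=\sum\ell\otimes\ell'\otimes v\in V^*\otimes V^*\otimes V$, the $\boldsymbol k$-algebra $\{V,m\}$ is the (not necessarily associative) algebra structure on $V$ with product $ab:=\sum\ell(a)\ell'(b)v$. The algebra $\{V,m\}$ is commutative exactly when $m\in\mathcal C$. Simple means having no two-sided ideals other than $0$ and $V$ (the paper's proof shows nonexistence of two-sided ideals of dimension $d$ with $0<d<n$). The automorphism group of $\{V,m\}$ is the stabilizer of $m$ in $\mathrm{GL}(V)$ acting naturally on $V^*\otimes V^*\otimes V$. *)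

theory Defs
  imports "HOL-Analysis.Analysis" "HOL-Computational_Algebra.Polynomial"
begin

text \<open>V = k^n (with its standard basis).  A tensor m in V* (x) V* (x) V is given by its
  coordinates m i j l (the coefficient of e_i* (x) e_j* (x) e_l).\<close>

type_synonym ('k, 'n) tensor3 = "'n \<Rightarrow> 'n \<Rightarrow> 'n \<Rightarrow> 'k"

text \<open>The subspace C of tensors fixed by the involution swapping the two V* factors.\<close>
definition sym_tensors :: "('k, 'n) tensor3 set" where
  "sym_tensors = {m. \<forall>i j l. m i j l = m j i l}"

text \<open>The product of the algebra {V,m}: ab = sum l(a) l'(b) v.\<close>
definition alg_mult :: "('k::comm_ring_1, 'n::finite) tensor3 \<Rightarrow> 'k^'n \<Rightarrow> 'k^'n \<Rightarrow> 'k^'n" where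
  "alg_mult m a b = (\<chi> l. \<Sum>i\<in>UNIV. \<Sum>j\<in>UNIV. a$i * b$j * m i j l)"

definition alg_commutative :: "('k::comm_ring_1, 'n::finite) tensor3 \<Rightarrow> bool" where
  "alg_commutative m \<longleftrightarrow> (\<forall>a b. alg_mult m a b = alg_mult m b a)"

text \<open>Two-sided ideal of {V,m}: a linear subspace closed under multiplication from both sides.\<close>
definition alg_ideal :: "('k::field, 'n::finite) tensor3 \<Rightarrow> ('k^'n) set \<Rightarrow> bool" where
  "alg_ideal m I \<longleftrightarrow> vec.subspace I \<and>
     (\<forall>a x. x \<in> I \<longrightarrow> alg_mult m a x \<in> I \<and> alg_mult m x a \<in> I)"

definition alg_simple :: "('k::field, 'n::finite) tensor3 \<Rightarrow> bool" where
  "alg_simple m \<longleftrightarrow> (\<forall>I. alg_ideal m I \<longrightarrow> I = {0} \<or> I = UNIV)"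

text \<open>Automorphisms of {V,m}: elements of GL(V) preserving the product
  (equivalently, the stabiliser of m in GL(V)).\<close>
definition alg_automorphism :: "('k::field, 'n::finite) tensor3 \<Rightarrow> ('k^'n \<Rightarrow> 'k^'n) \<Rightarrow> bool" where
  "alg_automorphism m g \<longleftrightarrow> Vector_Spaces.linear (*s) (*s) g \<and> bij g \<and>
     (\<forall>a b. g (alg_mult m a b) = alg_mult m (g a) (g b))"

definition trivial_aut_group :: "('k::field, 'n::finite) tensor3 \<Rightarrow> bool" where
  "trivial_aut_group m \<longleftrightarrow> (\<forall>g. alg_automorphism m g \<longrightarrow> g = id)"

text \<open>Polynomial functions in the coordinates of an affine space 'i => 'k.\<close>
inductive_set poly_funs :: "(('i \<Rightarrow> 'k::comm_ring_1) \<Rightarrow> 'k) set" where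
  const: "(\<lambda>x. c) \<in> poly_funs"
| coord: "(\<lambda>x. x i) \<in> poly_funs"
| add: "f \<in> poly_funs \<Longrightarrow> g \<in> poly_funs \<Longrightarrow> (\<lambda>x. f x + g x) \<in> poly_funs"
| mult: "f \<in> poly_funs \<Longrightarrow> g \<in> poly_funs \<Longrightarrow> (\<lambda>x. f x * g x) \<in> poly_funs"

text \<open>Zariski topology on the affine space V* (x) V* (x) V with coordinates indexed by
  triples (i,j,l); the Zariski topology on C is the subspace topology.\<close>
definition zariski_closed :: "(('n \<times> 'n \<times> 'n \<Rightarrow> 'k::comm_ring_1) set) \<Rightarrow> bool" where
  "zariski_closed Z \<longleftrightarrow> (\<exists>F. F \<subseteq> poly_funs \<and> Z = {x. \<forall>f\<in>F. f x = 0})"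

definition zariski_open_in :: "('k::comm_ring_1, 'n) tensor3 set \<Rightarrow> ('k, 'n) tensor3 set \<Rightarrow> bool" where
  "zariski_open_in S U \<longleftrightarrow> U \<subseteq> S \<and>
     (\<exists>Z. zariski_closed Z \<and> U = S - {m. (\<lambda>(i,j,l). m i j l) \<in> Z})"

end

theory Submission
  imports Defs
begin

definition ispoly :: "(('k::comm_ring_1, 'n) tensor3 \<Rightarrow> 'k) \<Rightarrow> bool" where
  "ispoly F \<longleftrightarrow> (\<lambda>x. F (\<lambda>i j l. x (i,j,l))) \<in> poly_funs"

lemma ispoly_const[intro]: "ispoly (\<lambda>m. c)"
  unfolding ispoly_def by (rule poly_funs.const)

lemma ispoly_coord[intro]: "ispoly (\<lambda>m. m i j l)"
  unfolding ispoly_def using poly_funs.coord[of "(i,j,l)"] by simp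

lemma ispoly_add[intro]: "ispoly F \<Longrightarrow> ispoly G \<Longrightarrow> ispoly (\<lambda>m. F m + G m)"
  unfolding ispoly_def by (rule poly_funs.add)

lemma ispoly_mult[intro]: "ispoly F \<Longrightarrow> ispoly G \<Longrightarrow> ispoly (\<lambda>m. F m * G m)"
  unfolding ispoly_def by (rule poly_funs.mult)

lemma ispoly_sum[intro]: "(\<And>a. a \<in> A \<Longrightarrow> ispoly (F a)) \<Longrightarrow> ispoly (\<lambda>m. \<Sum>a\<in>A. F a m)"
proof (induction A rule: infinite_finite_induct)
  case (infinite A) then show ?case by auto
next
  case empty then show ?case by auto
next
  case (insert x F) then show ?case by (auto simp: sum.insert)
qed

lemma ispoly_prod[intro]: "(\<And>a. a \<in> A \<Longrightarrow> ispoly (F a)) \<Longrightarrow> ispoly (\<lambda>m. \<Prod>a\<in>A. F a m)"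
proof (induction A rule: infinite_finite_induct)
  case (infinite A) then show ?case by auto
next
  case empty then show ?case by auto
next
  case (insert x F) then show ?case by (auto simp: prod.insert)
qed

lemma ispoly_det[intro]:
  fixes A :: "('k::comm_ring_1, 'n::finite) tensor3 \<Rightarrow> 'k^'a::finite^'a"
  assumes "\<And>i j. ispoly (\<lambda>m. A m $ i $ j)"
  shows "ispoly (\<lambda>m. det (A m))"
  unfolding det_def using assms by (intro ispoly_sum ispoly_mult ispoly_const ispoly_prod) auto

definition polyv :: "(('k::comm_ring_1, 'n) tensor3 \<Rightarrow> 'k^'b) \<Rightarrow> bool" where
  "polyv F \<longleftrightarrow> (\<forall>l. ispoly (\<lambda>m. F m $ l))"

lemma polyv_const[intro]: "polyv (\<lambda>m. c)"
  unfolding polyv_def by auto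

lemma polyv_mult[intro]:
  fixes F G :: "('k::comm_ring_1, 'n::finite) tensor3 \<Rightarrow> 'k^'n"
  assumes "polyv F" "polyv G"
  shows "polyv (\<lambda>m. alg_mult m (F m) (G m))"
  using assms unfolding polyv_def alg_mult_def by (auto intro!: ispoly_sum ispoly_mult)

lemma polyv_iter[intro]:
  fixes F G :: "('k::comm_ring_1, 'n::finite) tensor3 \<Rightarrow> 'k^'n"
  assumes "polyv F" "polyv G"
  shows "polyv (\<lambda>m. ((\<lambda>v. alg_mult m (F m) v) ^^ k) (G m))"
  using assms by (induction k) auto

definition Lmat :: "('k::comm_ring_1, 'n::finite) tensor3 \<Rightarrow> 'k^'n \<Rightarrow> 'k^'n^'n" where
  "Lmat m a = (\<chi> l j. \<Sum>i\<in>UNIV. a$i * m i j l)"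

lemma alg_mult_Lmat: "alg_mult m a x = Lmat m a *v x"
  unfolding alg_mult_def Lmat_def matrix_vector_mult_def
  apply (simp add: vec_eq_iff sum_distrib_right)
  apply (subst sum.swap)
  apply (simp add: mult_ac)
  done

lemma linear_alg_mult: "Vector_Spaces.linear (*s) (*s) (alg_mult (m::('k::field,'n::finite) tensor3) a)"
proof -
  have "alg_mult m a = (*v) (Lmat m a)" by (rule ext) (simp add: alg_mult_Lmat)
  then show ?thesis by simp
qed

lemma linear_funpow:
  fixes f :: "'k::field^'n \<Rightarrow> 'k^'n"
  assumes "Vector_Spaces.linear (*s) (*s) f"
  shows "Vector_Spaces.linear (*s) (*s) (f ^^ k)"
proof (induction k)
  case 0 then show ?case using vec.linear_id by (simp add: id_def)
next
  case (Suc k)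
  then show ?case using Vector_Spaces.linear_compose[OF Suc assms] by (simp add: o_def)
qed

definition nu :: "'n::finite \<Rightarrow> nat" where
  "nu = (SOME h. bij_betw h (UNIV::'n set) {..<CARD('n)})"

lemma nu_bij: "bij_betw (nu::'n::finite\<Rightarrow>nat) UNIV {..<CARD('n)}"
proof -
  have "\<exists>h. bij_betw h (UNIV::'n set) {..<CARD('n)}"
    using ex_bij_betw_finite_nat[of "UNIV::'n set"] by (simp add: atLeast0LessThan)
  then show ?thesis unfolding nu_def by (rule someI_ex)
qed

definition nui :: "nat \<Rightarrow> 'n::finite" where "nui = inv_into UNIV nu"

lemma nu_less[simp]: "nu (i::'n::finite) < CARD('n)"
  using nu_bij[where 'n='n] unfolding bij_betw_def by auto

lemma nui_nu[simp]: "nui (nu (i::'n::finite)) = i"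
  using nu_bij[where 'n='n] unfolding nui_def bij_betw_def by auto

lemma nu_nui[simp]: "k < CARD('n) \<Longrightarrow> nu (nui k :: 'n::finite) = k"
  using nu_bij[where 'n='n] unfolding nui_def bij_betw_def by (auto simp: f_inv_into_f)

lemma nu_inj[simp]: "nu (i::'n::finite) = nu j \<longleftrightarrow> i = j"
  using nui_nu[of i] nui_nu[of j] by metis

definition Wm :: "('k::field, 'n::finite) tensor3 \<Rightarrow> 'n \<Rightarrow> 'n \<Rightarrow> 'k^'n \<Rightarrow> 'k^'n" where
  "Wm m p q x = ((alg_mult m (axis (nui 0) 1)) ^^ nu p)
      (alg_mult m (axis (nui (CARD('n) - 1)) 1)
        (((alg_mult m (axis (nui 0) 1)) ^^ ((CARD('n) - nu q) mod CARD('n))) x))"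

definition Mbig :: "('k::field, 'n::finite) tensor3 \<Rightarrow> 'k^('n\<times>'n)^('n\<times>'n)" where
  "Mbig m = (\<chi> rs pq. Wm m (fst pq) (snd pq) (axis (snd rs) 1) $ fst rs)"

definition Phi2 :: "('k::field, 'n::finite) tensor3 \<Rightarrow> 'k" where
  "Phi2 m = det (Mbig m)"

lemma ispoly_Phi2: "ispoly (Phi2 :: ('k::field,'n::finite) tensor3 \<Rightarrow> 'k)"
proof -
  have W: "polyv (\<lambda>m::('k,'n) tensor3. Wm m p q (axis s 1))" for p q s
  proof -
    have e: "(\<lambda>m::('k,'n) tensor3. Wm m p q (axis s 1)) = (\<lambda>m. ((\<lambda>v. alg_mult m (axis (nui 0) 1) v) ^^ nu p)
      (alg_mult m (axis (nui (CARD('n) - 1)) 1)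
        (((\<lambda>v. alg_mult m (axis (nui 0) 1) v) ^^ ((CARD('n) - nu q) mod CARD('n))) (axis s 1))))"
      unfolding Wm_def by (rule refl)
    show ?thesis unfolding e
      by (rule polyv_iter[OF polyv_const polyv_mult[OF polyv_const polyv_iter[OF polyv_const polyv_const]]])
  qed
  show ?thesis unfolding Phi2_def[abs_def] Mbig_def
  proof (rule ispoly_det)
    fix i j :: "'n \<times> 'n"
    show "ispoly (\<lambda>m::('k,'n) tensor3. (\<chi> rs pq. Wm m (fst pq) (snd pq) (axis (snd rs) 1) $ fst rs) $ i $ j)"
      using W[of "fst j" "snd j" "snd i"] unfolding polyv_def by simp
  qed
qed

lemma linear_Wm: "Vector_Spaces.linear (*s) (*s) (Wm (m::('k::field,'n::finite) tensor3) p q)"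
proof -
  have "Wm m p q = ((alg_mult m (axis (nui 0) 1)) ^^ nu p) \<circ> alg_mult m (axis (nui (CARD('n) - 1)) 1)
     \<circ> ((alg_mult m (axis (nui 0) 1)) ^^ ((CARD('n) - nu q) mod CARD('n)))"
    by (rule ext) (simp add: Wm_def)
  then show ?thesis
    using Vector_Spaces.linear_compose[OF linear_funpow[OF linear_alg_mult]
       Vector_Spaces.linear_compose[OF linear_alg_mult linear_funpow[OF linear_alg_mult]]] by simp
qed

lemma ideal_iter: "alg_ideal m I \<Longrightarrow> x \<in> I \<Longrightarrow> ((alg_mult m a) ^^ k) x \<in> I"
  by (induction k) (auto simp: alg_ideal_def)

lemma ideal_Wm: "alg_ideal m I \<Longrightarrow> x \<in> I \<Longrightarrow> Wm m p q x \<in> I"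
proof -
  assume I: "alg_ideal m I" and x: "x \<in> I"
  have "((alg_mult m (axis (nui 0) 1)) ^^ ((CARD('n) - nu q) mod CARD('n))) x \<in> I"
    by (rule ideal_iter[OF I x])
  then have "alg_mult m (axis (nui (CARD('n) - 1)) 1) (((alg_mult m (axis (nui 0) 1)) ^^ ((CARD('n) - nu q) mod CARD('n))) x) \<in> I"
    using I unfolding alg_ideal_def by blast
  then show ?thesis unfolding Wm_def by (rule ideal_iter[OF I])
qed

lemma crit_simple:
  fixes m :: "('k::field, 'n::finite) tensor3"
  assumes "Phi2 m \<noteq> 0"
  shows "alg_simple m"
  unfolding alg_simple_def
proof (intro allI impI)
  fix I assume I: "alg_ideal m I"
  show "I = {0} \<or> I = UNIV"
  proof (cases "I = {0}")
    case True then show ?thesis by simp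
  next
    case False
    have sub: "vec.subspace I" using I by (simp add: alg_ideal_def)
    have "0 \<in> I" using vec.subspace_0[OF sub] .
    with False obtain x where xI: "x \<in> I" and x0: "x \<noteq> 0" by auto
    then obtain s0 where xs0: "x $ s0 \<noteq> 0" by (auto simp: vec_eq_iff)
    obtain Mi where Mi: "Mbig m ** Mi = mat 1"
      using assms unfolding Phi2_def invertible_det_nz[symmetric] invertible_def by blast
    have "y \<in> I" for y
    proof -
      define T :: "'k^('n\<times>'n)" where "T = (\<chi> rs. if snd rs = s0 then y $ fst rs / x $ s0 else 0)"
      define c where "c = Mi *v T"
      have Mc: "Mbig m *v c = T" unfolding c_def
        by (simp add: matrix_vector_mul_assoc Mi)
      have "y = (\<Sum>pq\<in>UNIV. c $ pq *s Wm m (fst pq) (snd pq) x)"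
      proof (subst vec_eq_iff, intro allI)
        fix r
        have "(\<Sum>pq\<in>UNIV. c $ pq *s Wm m (fst pq) (snd pq) x) $ r
            = (\<Sum>pq\<in>UNIV. c $ pq * Wm m (fst pq) (snd pq) x $ r)"
          by (simp only: sum_component vector_smult_component)
        also have "\<dots> = (\<Sum>pq\<in>UNIV. c $ pq * (\<Sum>s\<in>UNIV. x $ s * Wm m (fst pq) (snd pq) (axis s 1) $ r))"
          by (rule sum.cong[OF refl]) (rule arg_cong[where f="\<lambda>t. _ * t"], rule Cartesian_Space.linear_componentwise[OF linear_Wm])
        also have "\<dots> = (\<Sum>pq\<in>UNIV. \<Sum>s\<in>UNIV. x $ s * (Mbig m $ (r,s) $ pq * c $ pq))"
          by (simp add: Mbig_def sum_distrib_left mult_ac)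
        also have "\<dots> = (\<Sum>s\<in>UNIV. \<Sum>pq\<in>UNIV. x $ s * (Mbig m $ (r,s) $ pq * c $ pq))"
          by (rule sum.swap)
        also have "\<dots> = (\<Sum>s\<in>UNIV. x $ s * (\<Sum>pq\<in>UNIV. Mbig m $ (r,s) $ pq * c $ pq))"
          by (simp only: sum_distrib_left)
        also have "\<dots> = (\<Sum>s\<in>UNIV. x $ s * T $ (r,s))"
        proof (rule sum.cong[OF refl])
          fix s
          have "T $ (r,s) = (Mbig m *v c) $ (r,s)" using Mc by simp
          also have "\<dots> = (\<Sum>pq\<in>UNIV. Mbig m $ (r,s) $ pq * c $ pq)"
            by (simp add: matrix_vector_mult_def)
          finally show "x $ s * (\<Sum>pq\<in>UNIV. Mbig m $ (r,s) $ pq * c $ pq) = x $ s * T $ (r,s)" by simp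
        qed
        also have "\<dots> = (\<Sum>s\<in>UNIV. if s = s0 then x $ s * (y $ r / x $ s0) else 0)"
          by (rule sum.cong[OF refl]) (simp add: T_def)
        also have "\<dots> = y $ r" using xs0 by simp
        finally show "y $ r = (\<Sum>pq\<in>UNIV. c $ pq *s Wm m (fst pq) (snd pq) x) $ r" by simp
      qed
      also have "\<dots> \<in> I"
        by (rule vec.subspace_sum[OF sub]) (rule vec.subspace_scale[OF sub], rule ideal_Wm[OF I xI])
      finally show ?thesis .
    qed
    then show ?thesis by auto
  qed
qed


lemma sym_comm: "m \<in> sym_tensors \<Longrightarrow> alg_mult m a b = alg_mult m b a"
  unfolding sym_tensors_def alg_mult_def
  apply (simp add: vec_eq_iff)
  apply (subst sum.swap)
  apply (simp add: mult_ac)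
  done

definition tau :: "('k::comm_ring_1, 'n::finite) tensor3 \<Rightarrow> 'k^'n \<Rightarrow> 'k" where
  "tau m a = trace (Lmat m a)"

definition tv :: "('k::comm_ring_1, 'n::finite) tensor3 \<Rightarrow> 'k^'n" where
  "tv m = (\<chi> i. tau m (axis i 1))"

definition Bm :: "('k::comm_ring_1, 'n::finite) tensor3 \<Rightarrow> 'k^'n^'n" where
  "Bm m = (\<chi> i j. tau m (alg_mult m (axis i 1) (axis j 1)))"

definition ep :: "('k::comm_ring_1, 'n::finite) tensor3 \<Rightarrow> 'k^'n" where
  "ep m = (\<chi> k. det (\<chi> i j. if j = k then tv m $ i else Bm m $ i $ j))"

definition kry :: "('k::comm_ring_1, 'n::finite) tensor3 \<Rightarrow> nat \<Rightarrow> 'k^'n" where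
  "kry m k = ((alg_mult m (ep m)) ^^ k) (ep m)"

definition Km :: "('k::comm_ring_1, 'n::finite) tensor3 \<Rightarrow> 'k^'n^'n" where
  "Km m = (\<chi> r p. kry m (nu p) $ r)"

definition Phi1 :: "('k::comm_ring_1, 'n::finite) tensor3 \<Rightarrow> 'k" where
  "Phi1 m = det (Bm m) * det (Km m)"

lemma tau_alt: "tau m a = (\<Sum>l\<in>UNIV. \<Sum>i\<in>UNIV. a$i * m i l l)"
  unfolding tau_def trace_def Lmat_def by simp

lemma ispoly_if: "ispoly F \<Longrightarrow> ispoly G \<Longrightarrow> ispoly (\<lambda>m. if P then F m else G m)"
  by (cases P) simp_all

lemma ispoly_tau:
  fixes F :: "('k::comm_ring_1, 'n::finite) tensor3 \<Rightarrow> 'k^'n"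
  assumes "polyv F" shows "ispoly (\<lambda>m. tau m (F m))"
  using assms unfolding tau_alt polyv_def by (intro ispoly_sum ispoly_mult) auto

lemma ispoly_Phi1: "ispoly (Phi1 :: ('k::comm_ring_1,'n::finite) tensor3 \<Rightarrow> 'k)"
proof -
  have B: "ispoly (\<lambda>m::('k,'n) tensor3. Bm m $ i $ j)" for i j
    unfolding Bm_def by (simp add: ispoly_tau polyv_mult polyv_const)
  have t: "ispoly (\<lambda>m::('k,'n) tensor3. tv m $ i)" for i
    unfolding tv_def by (simp add: ispoly_tau polyv_const)
  have e: "polyv (ep :: ('k,'n) tensor3 \<Rightarrow> _)"
    unfolding polyv_def ep_def
  proof
    fix k
    show "ispoly (\<lambda>m::('k,'n) tensor3. (\<chi> k. det (\<chi> i j. if j = k then tv m $ i else Bm m $ i $ j)) $ k)"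
      apply simp
      apply (rule ispoly_det[where A="\<lambda>m. \<chi> i j. if j = k then tv m $ i else Bm m $ i $ j"])
      apply simp
      apply (rule ispoly_if)
      apply (simp_all add: B t)
      done
  qed
  have K: "ispoly (\<lambda>m::('k,'n) tensor3. Km m $ r $ p)" for r p
  proof -
    have "polyv (\<lambda>m::('k,'n) tensor3. ((\<lambda>v. alg_mult m (ep m) v) ^^ nu p) (ep m))"
      by (rule polyv_iter[OF e e])
    then show ?thesis unfolding Km_def kry_def polyv_def by simp
  qed
  show ?thesis unfolding Phi1_def[abs_def]
    by (rule ispoly_mult; rule ispoly_det) (simp_all add: B K)
qed


lemma if01_mult: "(if P then 1 else 0) * (x::'a::semiring_1) = (if P then x else 0)"
  by simp

lemma tau_axis: "tau m (axis i 1) = (\<Sum>l\<in>UNIV. m i l l)"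
  unfolding tau_alt by (simp add: axis_def if01_mult)

lemma tau_lin: "tau m a = (\<Sum>i\<in>UNIV. a$i * tv m $ i)"
proof -
  have "tau m a = (\<Sum>i\<in>UNIV. \<Sum>l\<in>UNIV. a$i * m i l l)"
    unfolding tau_alt by (rule sum.swap)
  also have "\<dots> = (\<Sum>i\<in>UNIV. a$i * tv m $ i)"
    by (simp add: tv_def tau_axis sum_distrib_left)
  finally show ?thesis .
qed

lemma tau_mult_lin:
  fixes m :: "('k::field, 'n::finite) tensor3"
  shows "tau m (alg_mult m a x) = (\<Sum>j\<in>UNIV. x$j * tau m (alg_mult m a (axis j 1)))"
proof -
  have "tau m (alg_mult m a x) = (\<Sum>i\<in>UNIV. (\<Sum>j\<in>UNIV. x$j * alg_mult m a (axis j 1) $ i) * tv m $ i)"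
    unfolding tau_lin
    by (rule sum.cong[OF refl]) (rule arg_cong[where f="\<lambda>t. t * _"], rule Cartesian_Space.linear_componentwise[OF linear_alg_mult])
  also have "\<dots> = (\<Sum>i\<in>UNIV. \<Sum>j\<in>UNIV. x$j * (alg_mult m a (axis j 1) $ i * tv m $ i))"
    by (simp add: sum_distrib_left sum_distrib_right mult_ac)
  also have "\<dots> = (\<Sum>j\<in>UNIV. \<Sum>i\<in>UNIV. x$j * (alg_mult m a (axis j 1) $ i * tv m $ i))"
    by (rule sum.swap)
  also have "\<dots> = (\<Sum>j\<in>UNIV. x$j * tau m (alg_mult m a (axis j 1)))"
    unfolding tau_lin[of m "alg_mult m a (axis _ 1)"] by (simp add: sum_distrib_left)
  finally show ?thesis .
qed

lemma Bm_mult: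
  fixes m :: "('k::field, 'n::finite) tensor3"
  shows "(Bm m *v e) $ i = tau m (alg_mult m (axis i 1) e)"
  unfolding tau_mult_lin[of m _ e] by (simp add: matrix_vector_mult_def Bm_def mult_ac)

lemma crit_aut:
  fixes m :: "('k::field, 'n::finite) tensor3"
  assumes sym: "m \<in> sym_tensors" and P: "Phi1 m \<noteq> 0"
  shows "trivial_aut_group m"
  unfolding trivial_aut_group_def
proof (intro allI impI)
  fix g assume "alg_automorphism m g"
  then have lin: "Vector_Spaces.linear (*s) (*s) g" and bg: "bij g"
    and hom: "\<And>a b. g (alg_mult m a b) = alg_mult m (g a) (g b)"
    unfolding alg_automorphism_def by auto
  from P have dB: "det (Bm m) \<noteq> 0" and dK: "det (Km m) \<noteq> 0" by (auto simp: Phi1_def)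
  define G where "G = matrix g"
  have gG: "g x = G *v x" for x unfolding G_def by (simp add: matrix_works[OF lin])
  have "det G \<noteq> 0" unfolding G_def using det_nz_iff_inj_gen[OF lin] bg by (simp add: bij_is_inj)
  then obtain H where GH: "G ** H = mat 1" and HG: "H ** G = mat 1"
    unfolding invertible_det_nz[symmetric] invertible_def by blast
  define h where "h x = H *v x" for x
  have gh: "g (h x) = x" for x
    unfolding gG h_def by (simp add: matrix_vector_mul_assoc GH)
  have tau_g: "tau m (g a) = tau m a" for a
  proof -
    have LG: "Lmat m (g a) ** G = G ** Lmat m a"
    proof (rule matrix_eq[THEN iffD2], intro allI)
      fix x
      have "(Lmat m (g a) ** G) *v x = alg_mult m (g a) (g x)"
        by (simp add: alg_mult_Lmat gG matrix_vector_mul_assoc)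
      also have "\<dots> = g (alg_mult m a x)" by (simp add: hom)
      also have "\<dots> = (G ** Lmat m a) *v x"
        by (simp add: alg_mult_Lmat gG matrix_vector_mul_assoc)
      finally show "(Lmat m (g a) ** G) *v x = (G ** Lmat m a) *v x" .
    qed
    have "Lmat m (g a) = (Lmat m (g a) ** G) ** H"
      by (simp add: matrix_mul_assoc[symmetric] GH)
    also have "\<dots> = (G ** Lmat m a) ** H" by (simp add: LG)
    finally have "trace (Lmat m (g a)) = trace ((G ** Lmat m a) ** H)" by simp
    also have "\<dots> = trace (H ** (G ** Lmat m a))" by (rule trace_mul_sym)
    also have "\<dots> = trace (Lmat m a)" by (simp add: matrix_mul_assoc HG)
    finally show ?thesis by (simp add: tau_def)
  qed
  obtain Bi where BBi: "Bm m ** Bi = mat 1" and BiB: "Bi ** Bm m = mat 1"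
    using dB unfolding invertible_det_nz[symmetric] invertible_def by blast
  define e where "e = Bi *v tv m"
  have Be: "Bm m *v e = tv m" unfolding e_def by (simp add: matrix_vector_mul_assoc BBi)
  have char: "Bm m *v f = tv m \<longleftrightarrow> (\<forall>i. tau m (alg_mult m (axis i 1) f) = tau m (axis i 1))" for f
    by (simp add: vec_eq_iff Bm_mult tv_def)
  have key: "tau m (alg_mult m x e) = tau m x" for x
  proof -
    have "tau m (alg_mult m x e) = tau m (alg_mult m e x)" by (simp add: sym_comm[OF sym])
    also have "\<dots> = (\<Sum>j\<in>UNIV. x$j * tau m (alg_mult m e (axis j 1)))" by (rule tau_mult_lin)
    also have "\<dots> = (\<Sum>j\<in>UNIV. x$j * tau m (axis j 1))"
      using Be[unfolded char] by (simp add: sym_comm[OF sym, of _ e])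
    also have "\<dots> = tau m x" by (simp add: tau_lin[of m x] tv_def)
    finally show ?thesis .
  qed
  have "Bm m *v g e = tv m" unfolding char
  proof
    fix i
    have "tau m (alg_mult m (axis i 1) (g e)) = tau m (alg_mult m (g (h (axis i 1))) (g e))" by (simp add: gh)
    also have "\<dots> = tau m (alg_mult m (h (axis i 1)) e)" by (simp add: hom[symmetric] tau_g)
    also have "\<dots> = tau m (h (axis i 1))" by (rule key)
    also have "\<dots> = tau m (axis i 1)" by (metis gh tau_g)
    finally show "tau m (alg_mult m (axis i 1) (g e)) = tau m (axis i 1)" .
  qed
  then have ge: "g e = e"
    by (metis Be matrix_vector_mul_assoc BiB matrix_vector_mul_lid)
  have ep_eq: "ep m = det (Bm m) *s e"
  proof (subst vec_eq_iff, intro allI)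
    fix k
    have "ep m $ k = det (\<chi> i j. if j = k then (Bm m *v e) $ i else Bm m $ i $ j)"
      by (simp only: ep_def Be vec_lambda_beta)
    also have "\<dots> = e $ k * det (Bm m)" by (rule cramer_lemma)
    finally show "ep m $ k = (det (Bm m) *s e) $ k" by (simp add: mult_ac)
  qed
  have gep: "g (ep m) = ep m"
    unfolding ep_eq by (simp add: vec.linear_scale[OF lin] ge)
  have gk: "g (kry m k) = kry m k" for k
  proof (induction k)
    case 0 then show ?case by (simp add: kry_def gep)
  next
    case (Suc k)
    have "kry m (Suc k) = alg_mult m (ep m) (kry m k)" by (simp add: kry_def)
    then show ?case by (simp add: hom gep Suc)
  qed
  obtain Ki where KKi: "Km m ** Ki = mat 1"
    using dK unfolding invertible_det_nz[symmetric] invertible_def by blast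
  show "g = id"
  proof
    fix x
    define c where "c = Ki *v x"
    have xc: "x = (\<Sum>p\<in>UNIV. c $ p *s kry m (nu p))"
    proof -
      have "x = Km m *v c" unfolding c_def by (simp add: matrix_vector_mul_assoc KKi)
      also have "\<dots> = (\<Sum>p\<in>UNIV. c $ p *s kry m (nu p))"
        by (simp add: vec_eq_iff matrix_vector_mult_def Km_def sum_component mult_ac)
      finally show ?thesis .
    qed
    have "g x = (\<Sum>p\<in>UNIV. c $ p *s g (kry m (nu p)))"
      by (subst xc) (simp add: vec.linear_sum[OF lin] vec.linear_scale[OF lin])
    also have "\<dots> = x" by (simp add: gk xc[symmetric])
    finally show "g x = id x" by simp
  qed
qed


lemma poly_funs_line:
  fixes a b :: "'i \<Rightarrow> 'k::comm_ring_1"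
  assumes "f \<in> poly_funs"
  shows "\<exists>p. \<forall>t. f (\<lambda>z. a z + t * b z) = poly p t"
  using assms
proof induction
  case (const c) then show ?case by (intro exI[of _ "[:c:]"]) simp
next
  case (coord i) then show ?case by (intro exI[of _ "[:a i, b i:]"]) (simp add: mult.commute)
next
  case (add f g)
  then obtain p q where "\<forall>t. f (\<lambda>z. a z + t * b z) = poly p t" "\<forall>t. g (\<lambda>z. a z + t * b z) = poly q t" by blast
  then show ?case by (intro exI[of _ "p + q"]) simp
next
  case (mult f g)
  then obtain p q where "\<forall>t. f (\<lambda>z. a z + t * b z) = poly p t" "\<forall>t. g (\<lambda>z. a z + t * b z) = poly q t" by blast
  then show ?case by (intro exI[of _ "p * q"]) simp
qed

lemma ispoly_line:
  fixes F :: "('k::comm_ring_1, 'n) tensor3 \<Rightarrow> 'k"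
  assumes "ispoly F"
  shows "\<exists>p. \<forall>t. F (\<lambda>i j l. ma i j l + t * (mb i j l - ma i j l)) = poly p t"
proof -
  obtain p where p: "\<forall>t. (\<lambda>x. F (\<lambda>i j l. x (i,j,l))) (\<lambda>z. (\<lambda>(i,j,l). ma i j l) z + t * (\<lambda>(i,j,l). mb i j l - ma i j l) z) = poly p t"
    using poly_funs_line[OF assms[unfolded ispoly_def]] by blast
  then show ?thesis by (intro exI[of _ p]) simp
qed

lemma alg_closed_infinite: "infinite (UNIV :: 'k::alg_closed_field set)"
proof
  assume fin: "finite (UNIV :: 'k set)"
  define q :: "'k poly" where "q = (\<Prod>a\<in>UNIV. [:-a, 1:])"
  have dq: "degree q = card (UNIV :: 'k set)"
    unfolding q_def by (subst degree_prod_eq_sum_degree) auto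
  have "card (UNIV :: 'k set) > 0" using fin by (simp add: card_gt_0_iff)
  then have "degree (q + 1) = degree q" using dq by (intro degree_add_eq_left) simp
  then have "degree (q + 1) > 0" using dq \<open>card (UNIV :: 'k set) > 0\<close> by simp
  then obtain x where "poly (q + 1) x = 0" using alg_closed_imp_poly_has_root by blast
  moreover have "poly q x = 0" unfolding q_def poly_prod using fin
    by (intro prod_zero) auto
  ultimately show False by simp
qed

lemma line_witness:
  fixes FA FB :: "('k::alg_closed_field, 'n) tensor3 \<Rightarrow> 'k"
  assumes "ispoly FA" "ispoly FB" "FA mb \<noteq> 0" "FB ma \<noteq> 0"
  shows "\<exists>t. FA (\<lambda>i j l. ma i j l + t * (mb i j l - ma i j l)) * FB (\<lambda>i j l. ma i j l + t * (mb i j l - ma i j l)) \<noteq> 0"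
proof -
  obtain pa where pa: "\<forall>t. FA (\<lambda>i j l. ma i j l + t * (mb i j l - ma i j l)) = poly pa t"
    using ispoly_line[OF assms(1)] by blast
  obtain pb where pb: "\<forall>t. FB (\<lambda>i j l. ma i j l + t * (mb i j l - ma i j l)) = poly pb t"
    using ispoly_line[OF assms(2)] by blast
  have "poly pa 1 \<noteq> 0" using pa[rule_format, of 1] assms(3) by simp
  moreover have "poly pb 0 \<noteq> 0" using pb[rule_format, of 0] assms(4) by simp
  ultimately have "pa * pb \<noteq> 0" by auto
  then have "finite {t. poly (pa * pb) t = 0}" by (rule poly_roots_finite)
  with alg_closed_infinite[where 'k='k] obtain t where "t \<notin> {t. poly (pa * pb) t = 0}"
    by (metis (mono_tags, lifting) UNIV_I ex_new_if_finite)
  then show ?thesis using pa pb by (intro exI[of _ t]) simp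
qed

lemma alg_mult_axis: "alg_mult m (axis i 1) (axis j 1) = (\<chi> l. m i j l)"
proof -
  have "(\<Sum>ib\<in>UNIV. \<Sum>ja\<in>UNIV. axis i 1 $ ib * axis j 1 $ ja * m ib ja l) = m i j l" for l
  proof -
    have "(\<Sum>ib\<in>UNIV. \<Sum>ja\<in>UNIV. axis i 1 $ ib * axis j 1 $ ja * m ib ja l)
        = (\<Sum>ib\<in>UNIV. if ib = i then m ib j l else 0)"
    proof (rule sum.cong[OF refl])
      fix ib
      show "(\<Sum>ja\<in>UNIV. axis i 1 $ ib * axis j 1 $ ja * m ib ja l) = (if ib = i then m ib j l else 0)"
        by (cases "ib = i") (simp_all add: axis_def if01_mult)
    qed
    also have "\<dots> = m i j l" by simp
    finally show ?thesis .
  qed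
  then show ?thesis unfolding alg_mult_def by (simp add: vec_eq_iff)
qed

definition EE :: "nat \<Rightarrow> 'k::zero_neq_one^'n::finite" where
  "EE k = axis (nui k) 1"

lemma chi_delta: "c < CARD('n) \<Longrightarrow> (\<chi> l::'n::finite. if nu l = c then 1 else 0) = (EE c :: 'k::zero_neq_one^'n)"
  unfolding EE_def axis_def by (auto simp: vec_eq_iff)

lemma axis_EE: "axis s 1 = EE (nu s)"
  unfolding EE_def by simp

lemma card_pos': "CARD('n::finite) > 0" by simp

definition Q2 :: "nat \<Rightarrow> nat \<Rightarrow> nat \<Rightarrow> nat \<Rightarrow> 'k::zero_neq_one" where
  "Q2 N a b c = (if a = 0 then (if c = Suc b mod N then 1 else 0)
      else if b = 0 then (if c = Suc a mod N then 1 else 0) else 0)"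

definition wit2 :: "('k::field, 'n::finite) tensor3" where
  "wit2 = (\<lambda>i j l. Q2 CARD('n) (nu i) (nu j) (nu l))"

lemma wit2_sym: "wit2 \<in> sym_tensors"
  unfolding sym_tensors_def wit2_def Q2_def by auto

lemma wit2_L0: "k < CARD('n) \<Longrightarrow> alg_mult (wit2::('k::field,'n::finite) tensor3) (EE 0) (EE k) = EE (Suc k mod CARD('n))"
  unfolding EE_def alg_mult_axis wit2_def Q2_def
  by (simp add: chi_delta[unfolded EE_def])

lemma wit2_LN: "k < CARD('n) \<Longrightarrow> alg_mult (wit2::('k::field,'n::finite) tensor3) (EE (CARD('n) - 1)) (EE k) = (if k = 0 then EE 0 else 0)"
proof -
  assume k: "k < CARD('n)"
  have "CARD('n) > 0" by simp
  show ?thesis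
  proof (cases "CARD('n) = 1")
    case True
    then have "k = 0" using k by simp
    then show ?thesis using True unfolding EE_def alg_mult_axis wit2_def Q2_def
      by (simp add: chi_delta[unfolded EE_def])
  next
    case False
    then have "CARD('n) - 1 \<noteq> 0" using \<open>CARD('n) > 0\<close> by linarith
    moreover have "Suc (CARD('n) - 1) mod CARD('n) = 0" using \<open>CARD('n) > 0\<close> by simp
    ultimately show ?thesis using k unfolding EE_def alg_mult_axis wit2_def Q2_def
      by (cases "k = 0") (simp_all add: chi_delta[unfolded EE_def], simp add: vec_eq_iff)
  qed
qed

lemma wit2_iter: "k < CARD('n) \<Longrightarrow> ((alg_mult (wit2::('k::field,'n::finite) tensor3) (EE 0)) ^^ i) (EE k) = EE ((k + i) mod CARD('n))"
proof (induction i)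
  case 0 then show ?case by simp
next
  case (Suc i)
  have "((k + i) mod CARD('n)) < CARD('n)" by simp
  then show ?case using Suc by (simp add: wit2_L0 mod_Suc_eq)
qed

lemma mod_lemma: "a < (N::nat) \<Longrightarrow> b < N \<Longrightarrow> ((a + (N - b) mod N) mod N = 0) \<longleftrightarrow> a = b"
proof (cases "b = 0")
  case True then show "a < N \<Longrightarrow> b < N \<Longrightarrow> ?thesis" by simp
next
  case False
  assume a: "a < N" and b: "b < N"
  then have "(N - b) mod N = N - b" using False by simp
  moreover have "(a + (N - b)) mod N = 0 \<longleftrightarrow> a = b"
  proof
    assume h: "(a + (N - b)) mod N = 0"
    have "a + (N - b) < 2 * N" "a + (N - b) > 0" using a b False by auto
    have "a + (N - b) = N"
    proof (cases "a + (N - b) < N")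
      case True then show ?thesis using h \<open>a + (N - b) > 0\<close> by simp
    next
      case False
      then have "(a + (N - b)) mod N = (a + (N - b) - N) mod N" by (simp add: le_mod_geq)
      also have "\<dots> = a + (N - b) - N" using \<open>a + (N - b) < 2 * N\<close> by simp
      finally show ?thesis using h False by simp
    qed
    then show "a = b" using b by simp
  next
    assume "a = b" then show "(a + (N - b)) mod N = 0" using b by simp
  qed
  ultimately show ?thesis by simp
qed

lemma wit2_Wm: "Wm (wit2::('k::field,'n::finite) tensor3) p q (axis s 1) = (if s = q then axis p 1 else 0)"
proof -
  let ?N = "CARD('n)"
  let ?j = "(?N - nu q) mod ?N"
  have "?N > 0" by simp
  have "((alg_mult (wit2::('k,'n) tensor3) (EE 0)) ^^ ?j) (axis s 1) = EE ((nu s + ?j) mod ?N)"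
    unfolding axis_EE by (rule wit2_iter) simp
  moreover have "alg_mult (wit2::('k,'n) tensor3) (EE (?N - 1)) (EE ((nu s + ?j) mod ?N))
      = (if s = q then EE 0 else 0)"
  proof -
    have lt: "(nu s + ?j) mod ?N < ?N" by simp
    have eq: "((nu s + ?j) mod ?N = 0) = (s = q)" using mod_lemma[of "nu s" ?N "nu q"] by simp
    show ?thesis by (simp only: wit2_LN[OF lt] eq)
  qed
  moreover have "((alg_mult (wit2::('k,'n) tensor3) (EE 0)) ^^ nu p) (EE 0) = axis p 1"
    using wit2_iter[where 'n='n and 'k='k, of 0 "nu p"] by (simp add: axis_EE)
  moreover have "((alg_mult (wit2::('k,'n) tensor3) (EE 0)) ^^ nu p) 0 = 0"
    by (rule vec.linear_0[OF linear_funpow[OF linear_alg_mult]])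
  ultimately show ?thesis unfolding Wm_def EE_def[symmetric] by auto
qed

lemma witness2: "\<exists>m::('k::field, 'n::finite) tensor3. m \<in> sym_tensors \<and> Phi2 m \<noteq> 0"
proof (intro exI conjI)
  show "wit2 \<in> sym_tensors" by (rule wit2_sym)
  have "Mbig (wit2::('k,'n) tensor3) = mat 1"
  proof -
    have "Mbig (wit2::('k,'n) tensor3) $ rs $ pq = mat 1 $ rs $ pq" for rs pq
      by (cases rs, cases pq) (simp only: Mbig_def vec_lambda_beta fst_conv snd_conv wit2_Wm, simp add: mat_def axis_def)
    then show ?thesis by (simp add: vec_eq_iff)
  qed
  then show "Phi2 (wit2::('k,'n) tensor3) \<noteq> 0" by (simp add: Phi2_def)
qed

lemma ep_scaled:
  fixes m :: "('k::field, 'n::finite) tensor3"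
  assumes Be: "Bm m *v e = tv m"
  shows "ep m = det (Bm m) *s e"
proof (subst vec_eq_iff, intro allI)
  fix k
  have "ep m $ k = det (\<chi> i j. if j = k then (Bm m *v e) $ i else Bm m $ i $ j)"
    by (simp only: ep_def Be vec_lambda_beta)
  also have "\<dots> = e $ k * det (Bm m)" by (rule cramer_lemma)
  finally show "ep m $ k = (det (Bm m) *s e) $ k" by (simp add: mult_ac)
qed

lemma alg_mult_scale: "alg_mult m (c *s a) (d *s b) = (c * d) *s alg_mult m a b"
  unfolding alg_mult_def by (simp add: vec_eq_iff sum_distrib_left mult_ac)

lemma sum_nu: "(\<Sum>l\<in>(UNIV::'n::finite set). f (nu l)) = (\<Sum>c<CARD('n). f c)"
  by (rule sum.reindex_bij_betw[OF nu_bij])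

definition R1 :: "nat \<Rightarrow> nat \<Rightarrow> nat \<Rightarrow> 'k::comm_ring_1" where
  "R1 N k c = (if k = N - 1 then (if c = 0 then 2 else 0) - (if c = N - 1 then 1 else 0)
      else (if c = Suc k then 1 else 0))"

definition P1 :: "nat \<Rightarrow> nat \<Rightarrow> nat \<Rightarrow> nat \<Rightarrow> 'k::comm_ring_1" where
  "P1 N a b c = (if a = 0 then R1 N b c else if b = 0 then R1 N a c
      else if a = b then (if c = a then (if a = N - 1 then -3 else -1) else 0)
      else (if c = 0 then 1 else 0))"

definition wit1 :: "('k::field, 'n::finite) tensor3" where
  "wit1 = (\<lambda>i j l. P1 CARD('n) (nu i) (nu j) (nu l))"

lemma wit1_sym: "wit1 \<in> sym_tensors"
  unfolding sym_tensors_def wit1_def P1_def by auto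

lemma R1_sum: "k < N \<Longrightarrow> (\<Sum>c<N. R1 N k c) = (1::'k::comm_ring_1)"
proof -
  assume k: "k < N"
  show ?thesis
  proof (cases "k = N - 1")
    case True
    have "(\<Sum>c<N. R1 N k c) = (\<Sum>c<N. (if c = 0 then 2 else 0) - (if c = N - 1 then 1 else (0::'k)))"
      using True by (simp add: R1_def)
    also have "\<dots> = 2 - 1" using k by (simp add: sum_subtractf)
    finally show ?thesis by simp
  next
    case False
    then have "Suc k < N" using k by linarith
    have "(\<Sum>c<N. R1 N k c) = (\<Sum>c<N. if c = Suc k then 1 else (0::'k))"
      using False by (simp add: R1_def)
    also have "\<dots> = 1" using \<open>Suc k < N\<close> by simp
    finally show ?thesis .
  qed
qed

definition t1 :: "nat \<Rightarrow> 'k::comm_ring_1" where "t1 N = (if N = 1 then 1 else -1)"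

lemma P1_diag_sum: "a < N \<Longrightarrow> (\<Sum>c<N. P1 N a c c) = (t1 N :: 'k::comm_ring_1)"
proof (cases "a = 0")
  case True
  assume "a < N"
  have "(\<Sum>c<N. P1 N a c c) = (\<Sum>c<N. if c = N - 1 then (if N - 1 = 0 then 2 else 0) - 1 else (0::'k))"
    using True by (intro sum.cong) (auto simp: P1_def R1_def)
  also have "\<dots> = (if N - 1 = 0 then 2 else 0) - 1" using \<open>a < N\<close> by simp
  also have "\<dots> = t1 N" using \<open>a < N\<close> by (auto simp: t1_def)
  finally show ?thesis .
next
  case False
  assume a: "a < N"
  then have N1: "N \<noteq> 1" "N - 1 \<noteq> 0" using False by auto
  have "(\<Sum>c<N. P1 N a c c) = (\<Sum>c<N. (if c = 0 then (if a = N - 1 then 2 else 0) else (0::'k))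
          + (if c = a then (if a = N - 1 then -3 else -1) else 0))"
    using False N1 by (intro sum.cong) (auto simp: P1_def R1_def)
  also have "\<dots> = (if a = N - 1 then 2 else 0) + (if a = N - 1 then -3 else -1)"
    using a by (simp add: sum.distrib)
  also have "\<dots> = t1 N" using N1 by (auto simp: t1_def)
  finally show ?thesis .
qed

definition S1 :: "nat \<Rightarrow> nat \<Rightarrow> nat \<Rightarrow> 'k::comm_ring_1" where
  "S1 N a b = (if a = 0 \<or> b = 0 then 1 else if a = b then (if a = N - 1 then -3 else -1) else 1)"

lemma P1_sum: "a < N \<Longrightarrow> b < N \<Longrightarrow> (\<Sum>c<N. P1 N a b c) = (S1 N a b :: 'k::comm_ring_1)"
proof -
  assume a: "a < N" and b: "b < N"
  consider "a = 0" | "a \<noteq> 0" "b = 0" | "a \<noteq> 0" "b \<noteq> 0" "a = b" | "a \<noteq> 0" "b \<noteq> 0" "a \<noteq> b" by blast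
  then show ?thesis
  proof cases
    case 1 then show ?thesis using R1_sum[OF b] by (simp add: P1_def S1_def)
  next
    case 2 then show ?thesis using R1_sum[OF a] by (simp add: P1_def S1_def)
  next
    case 3 then show ?thesis using a by (simp add: P1_def S1_def)
  next
    case 4 then show ?thesis using a by (simp add: P1_def S1_def)
  qed
qed

lemma wit1_tv: "tv (wit1::('k::field,'n::finite) tensor3) $ i = t1 CARD('n)"
  unfolding tv_def tau_axis wit1_def
  by (simp add: sum_nu[where f="\<lambda>c. P1 CARD('n) (nu i) c c"] P1_diag_sum)

lemma wit1_tau: "tau (wit1::('k::field,'n::finite) tensor3) v = t1 CARD('n) * (\<Sum>i\<in>UNIV. v $ i)"
  unfolding tau_lin wit1_tv by (simp add: sum_distrib_left mult_ac)

lemma wit1_Bm: "Bm (wit1::('k::field,'n::finite) tensor3) $ i $ j = t1 CARD('n) * S1 CARD('n) (nu i) (nu j)"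
  unfolding Bm_def alg_mult_axis wit1_tau
  by (simp add: wit1_def sum_nu[where f="\<lambda>c. P1 CARD('n) (nu i) (nu j) c"] P1_sum)

lemma t1_nz: "t1 N \<noteq> (0::'k::comm_ring_1)"
  by (simp add: t1_def)

lemma witness1:
  assumes two: "(2::'k::field) \<noteq> 0"
  shows "\<exists>m::('k, 'n::finite) tensor3. m \<in> sym_tensors \<and> Phi1 m \<noteq> 0"
proof (intro exI conjI)
  show "wit1 \<in> sym_tensors" by (rule wit1_sym)
  let ?N = "CARD('n)"
  let ?B = "Bm (wit1::('k,'n) tensor3)"
  have Be: "?B *v EE 0 = tv wit1"
  proof (subst vec_eq_iff, intro allI)
    fix i
    have "(?B *v EE 0) $ i = (\<Sum>j\<in>UNIV. ?B $ i $ j * (if j = nui 0 then 1 else 0))"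
      by (simp add: matrix_vector_mult_def EE_def axis_def)
    also have "\<dots> = (\<Sum>j\<in>UNIV. if j = nui 0 then ?B $ i $ j else 0)"
      by (rule sum.cong) simp_all
    also have "\<dots> = ?B $ i $ nui 0" by simp
    also have "\<dots> = t1 ?N" by (simp add: wit1_Bm S1_def)
    finally show "(?B *v EE 0) $ i = tv wit1 $ i" by (simp add: wit1_tv)
  qed
  have dB: "det ?B \<noteq> 0"
  proof -
    have "inj ((*v) ?B)"
      unfolding vec.linear_inj_iff_eq_0[OF matrix_vector_mul_linear_gen]
    proof (intro allI impI)
      fix x :: "'k^'n" assume x0: "?B *v x = 0"
      have row: "t1 ?N * (\<Sum>j\<in>UNIV. S1 ?N (nu i) (nu j) * x $ j) = 0" for i :: 'n
      proof -
        have "(?B *v x) $ i = t1 ?N * (\<Sum>j\<in>UNIV. S1 ?N (nu i) (nu j) * x $ j)"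
          by (simp add: matrix_vector_mult_def wit1_Bm sum_distrib_left mult_ac)
        then show ?thesis using x0 by simp
      qed
      have rowz: "(\<Sum>j\<in>UNIV. x $ j) = 0"
      proof -
        have "t1 ?N * (\<Sum>j\<in>UNIV. x $ j) = 0" using row[of "nui 0"] by (simp add: S1_def)
        then show ?thesis using t1_nz[of ?N] by (simp only: mult_eq_0_iff) blast
      qed
      have xi: "x $ i = 0" if i: "i \<noteq> nui 0" for i :: 'n
      proof -
        have a0: "nu i \<noteq> 0" using i by (metis nui_nu)
        define d :: 'k where "d = (if nu i = ?N - 1 then -3 else -1) - 1"
        have "d \<noteq> 0"
        proof -
          have f4: "(4::'k) = 2 * 2" by simp
          have "(4::'k) \<noteq> 0" by (metis two mult_eq_0_iff f4)
          then have "(-4::'k) \<noteq> 0" "(-2::'k) \<noteq> 0" using two by simp_all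
          then show ?thesis unfolding d_def by auto
        qed
        have "(\<Sum>j\<in>UNIV. S1 ?N (nu i) (nu j) * x $ j) = (\<Sum>j\<in>UNIV. x $ j + (if j = i then d * x $ j else 0))"
          by (intro sum.cong) (auto simp: S1_def d_def a0 algebra_simps)
        also have "\<dots> = d * x $ i" by (simp add: sum.distrib rowz)
        finally have "t1 ?N * (d * x $ i) = 0" using row[of i] by simp
        then have "d * x $ i = 0" using t1_nz[of ?N] by (simp only: mult_eq_0_iff) blast
        then show ?thesis using \<open>d \<noteq> 0\<close> by simp
      qed
      have "x $ nui 0 = 0"
      proof -
        have "(\<Sum>j\<in>UNIV. x $ j) = (\<Sum>j\<in>UNIV. if j = nui 0 then x $ j else 0)"
          by (intro sum.cong) (auto simp: xi)
        then show ?thesis using rowz by simp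
      qed
      with xi show "x = 0" by (metis vec_eq_iff zero_index)
    qed
    then show ?thesis using det_nz_iff_inj_gen[OF matrix_vector_mul_linear_gen[of ?B]] by simp
  qed
  define d where "d = det ?B"
  have ep: "ep (wit1::('k,'n) tensor3) = d *s EE 0" unfolding d_def by (rule ep_scaled[OF Be])
  have L0: "alg_mult (wit1::('k,'n) tensor3) (EE 0) (EE k) = EE (Suc k)" if "Suc k < ?N" for k :: nat
  proof -
    have "k \<noteq> ?N - 1" "k < ?N" using that by auto
    then show ?thesis using that unfolding EE_def alg_mult_axis wit1_def
      by (simp add: P1_def R1_def chi_delta[unfolded EE_def])
  qed
  have kr: "kry (wit1::('k,'n) tensor3) k = d ^ Suc k *s EE k" if "k < ?N" for k
    using that
  proof (induction k)
    case 0 then show ?case by (simp add: kry_def ep)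
  next
    case (Suc k)
    have "kry (wit1::('k,'n) tensor3) (Suc k) = alg_mult wit1 (ep wit1) (kry wit1 k)"
      by (simp add: kry_def)
    also have "\<dots> = alg_mult wit1 (d *s EE 0) (d ^ Suc k *s EE k)" using Suc by (simp add: ep)
    also have "\<dots> = d ^ Suc (Suc k) *s EE (Suc k)" using Suc.prems by (simp add: alg_mult_scale L0)
    finally show ?case .
  qed
  have K: "Km (wit1::('k,'n) tensor3) $ r $ p = (if r = p then d ^ Suc (nu p) else 0)" for r p
    by (simp add: Km_def kr EE_def axis_def)
  have "det (Km (wit1::('k,'n) tensor3)) = (\<Prod>i\<in>UNIV. Km (wit1::('k,'n) tensor3) $ i $ i)"
    by (rule det_diagonal) (simp add: K)
  moreover have "d \<noteq> 0" using dB d_def by simp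
  ultimately have "det (Km (wit1::('k,'n) tensor3)) \<noteq> 0" by (simp add: K)
  then show "Phi1 (wit1::('k,'n) tensor3) \<noteq> 0" using dB by (simp add: Phi1_def)
qed

theorem theorem3:
  assumes "(2::'k::alg_closed_field) \<noteq> 0"
  shows "\<exists>U::('k, 'n::finite) tensor3 set. zariski_open_in sym_tensors U \<and> U \<noteq> {} \<and>
           (\<forall>m\<in>U. alg_simple m \<and> alg_commutative m \<and> trivial_aut_group m)"
proof -
  define U :: "('k, 'n) tensor3 set" where "U = {m \<in> sym_tensors. Phi1 m * Phi2 m \<noteq> 0}"
  define f :: "('n \<times> 'n \<times> 'n \<Rightarrow> 'k) \<Rightarrow> 'k" where "f = (\<lambda>x. Phi1 (\<lambda>i j l. x (i,j,l)) * Phi2 (\<lambda>i j l. x (i,j,l)))"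
  have fp: "f \<in> poly_funs"
  proof -
    have "ispoly (Phi1 :: ('k,'n) tensor3 \<Rightarrow> 'k)" "ispoly (Phi2 :: ('k,'n) tensor3 \<Rightarrow> 'k)"
      by (rule ispoly_Phi1, rule ispoly_Phi2)
    from ispoly_mult[OF this] show ?thesis unfolding f_def ispoly_def by simp
  qed
  have "zariski_open_in sym_tensors U"
    unfolding zariski_open_in_def
  proof (intro conjI exI[of _ "{x. f x = 0}"])
    show "U \<subseteq> sym_tensors" unfolding U_def by auto
    show "zariski_closed {x. f x = 0}" unfolding zariski_closed_def
      by (intro exI[of _ "{f}"]) (use fp in auto)
    show "U = sym_tensors - {m. (\<lambda>(i,j,l). m i j l) \<in> {x. f x = 0}}"
      unfolding U_def f_def by (simp add: set_eq_iff)
  qed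
  moreover have "U \<noteq> {}"
  proof -
    obtain m1 :: "('k,'n) tensor3" where m1: "m1 \<in> sym_tensors" "Phi1 m1 \<noteq> 0" using witness1[OF assms] by blast
    obtain m2 :: "('k,'n) tensor3" where m2: "m2 \<in> sym_tensors" "Phi2 m2 \<noteq> 0" using witness2 by blast
    obtain t where t: "Phi1 (\<lambda>i j l. m2 i j l + t * (m1 i j l - m2 i j l)) * Phi2 (\<lambda>i j l. m2 i j l + t * (m1 i j l - m2 i j l)) \<noteq> 0"
    proof -
      have P: "ispoly (Phi1 :: ('k,'n) tensor3 \<Rightarrow> 'k)" "ispoly (Phi2 :: ('k,'n) tensor3 \<Rightarrow> 'k)"
        by (rule ispoly_Phi1, rule ispoly_Phi2)
      show ?thesis using line_witness[where FA=Phi1 and FB=Phi2 and mb=m1 and ma=m2, OF P m1(2) m2(2)] by (elim exE) (rule that)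
    qed
    have sy: "(\<lambda>i j l. m2 i j l + t * (m1 i j l - m2 i j l)) \<in> sym_tensors"
      using m1(1) m2(1) unfolding sym_tensors_def by auto
    have "(\<lambda>i j l. m2 i j l + t * (m1 i j l - m2 i j l)) \<in> U"
      unfolding U_def mem_Collect_eq using t sy by (intro conjI)
    then show ?thesis by blast
  qed
  moreover have "\<forall>m\<in>U. alg_simple m \<and> alg_commutative m \<and> trivial_aut_group m"
  proof
    fix m assume "m \<in> U"
    then have s: "m \<in> sym_tensors" and "Phi1 m \<noteq> 0" "Phi2 m \<noteq> 0" unfolding U_def by auto
    have "alg_simple m" by (rule crit_simple) fact
    moreover have "trivial_aut_group m" by (rule crit_aut) fact+
    moreover have "alg_commutative m" unfolding alg_commutative_def using sym_comm[OF s] by blast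
    ultimately show "alg_simple m \<and> alg_commutative m \<and> trivial_aut_group m" by blast
  qed
  ultimately show ?thesis by blast
qed

end
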